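(* Let $\varepsilon>0$ and $x_0$ satisfy $0\le x_0<\tfrac14$ and $\dfrac{\varepsilon^2}{\frac14-\varepsilon^2x_0}<1$. Define $\mathcal{C}:\mathbb{T}^1\to\mathbb{C}$ by $\mathcal{C}(\theta)=\tfrac14-\varepsilon^2x_0-\varepsilon^2e^{2\pi i\theta}$ and $\tilde\gamma:\mathbb{T}^1\to\mathbb{C}$ by $$\tilde\gamma(\theta)=\tfrac12+\varepsilon e^{2\pi i\theta}\sqrt{1+x_0e^{-4\pi i\theta}}$$ (principal branch of the square root). Let $\Gamma=\{(\langle 2\theta\rangle,\tilde\gamma(\theta)):\theta\in\mathbb{T}^1\}$. Then $\Gamma$ is an invariant $2$-curve for the static fibred quadratic polynomial $Q(\theta,z)=(\theta,\ z^2+\mathcal{C}(\theta))$; that is, $\tilde\gamma(\theta)^2+\mathcal{C}(\langle2\theta\rangle)=\tilde\gamma(\theta)$ for every $\theta\in\mathbb{T}^1$.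
   Context: $\mathbb{T}^1=\mathbb{R}/\mathbb{Z}$ and $\langle x\rangle$ denotes the fractional part. A $2$-curve is a set of the form $\{(\langle 2\theta\rangle,\tilde\gamma(\theta)):\theta\in\mathbb{T}^1\}$ with $\tilde\gamma:\mathbb{T}^1\to\mathbb{C}$ continuous and injective. For a fibred map $F(\theta,z)=(\theta+\alpha,f_\theta(z))$ (here $\alpha=0$, "static"), a $2$-curve is invariant if for some $\tau\in\{0,1\}$, $f_{\langle2\theta\rangle}(\tilde\gamma(\theta))=\tilde\gamma(\theta+\tfrac{\alpha+\tau}{2})$ for all $\theta$; here this is the case $\tau=0$. *)

theory Defs
  imports "HOL-Analysis.Analysis"
begin

text \<open>Functions on the circle T^1 = R/Z are represented as 1-periodic functions on the reals.
  A 2-curve is given by a parametrisation gt : T^1 -> C that is continuous and injective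
  (injectivity on T^1 = injectivity on a fundamental domain [0,1)).\<close>

definition two_curve_param :: "(real \<Rightarrow> complex) \<Rightarrow> bool" where
  "two_curve_param gt \<longleftrightarrow>
     (\<forall>\<theta>. gt (\<theta> + 1) = gt \<theta>) \<and> continuous_on UNIV gt \<and> inj_on gt {0..<1}"

definition two_curve_set :: "(real \<Rightarrow> complex) \<Rightarrow> (real \<times> complex) set" where
  "two_curve_set gt = {(frac (2 * \<theta>), gt \<theta>) | \<theta>. \<theta> \<in> {0..<1}}"

text \<open>Invariance of a 2-curve for a fibred map F(theta,z) = (theta + alpha, f theta z),
  with given tau in {0,1}:  f <2 theta> (gt theta) = gt (theta + (alpha+tau)/2).\<close>
definition invariant_two_curve ::
  "real \<Rightarrow> (real \<Rightarrow> complex \<Rightarrow> complex) \<Rightarrow> (real \<Rightarrow> complex) \<Rightarrow> bool" where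
  "invariant_two_curve \<alpha> f gt \<longleftrightarrow> two_curve_param gt \<and>
     (\<exists>\<tau>\<in>{0::real, 1}. \<forall>\<theta>. f (frac (2 * \<theta>)) (gt \<theta>) = gt (\<theta> + (\<alpha> + \<tau>) / 2))"

definition Cfun :: "real \<Rightarrow> real \<Rightarrow> real \<Rightarrow> complex" where
  "Cfun \<epsilon> x0 \<theta> = 1/4 - of_real (\<epsilon>^2 * x0) - of_real (\<epsilon>^2) * exp (2 * of_real pi * \<i> * of_real \<theta>)"

definition gamma_tilde :: "real \<Rightarrow> real \<Rightarrow> real \<Rightarrow> complex" where
  "gamma_tilde \<epsilon> x0 \<theta> = 1/2 + of_real \<epsilon> * exp (2 * of_real pi * \<i> * of_real \<theta>)
      * csqrt (1 + of_real x0 * exp (- 4 * of_real pi * \<i> * of_real \<theta>))"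

end

theory Submission
  imports Defs
begin

lemma e4: "exp (- 4 * of_real pi * \<i> * of_real t) = inverse (exp (2 * of_real pi * \<i> * of_real t))^2"
proof -
  have "exp (- 4 * of_real pi * \<i> * of_real t) = exp (-(2 * of_real pi * \<i> * of_real t) * 2)" by (simp add: algebra_simps)
  also have "\<dots> = exp (-(2 * of_real pi * \<i> * of_real t))^2" by (metis exp_of_nat_mult of_nat_numeral mult.commute)
  finally show ?thesis by (simp add: exp_minus)
qed

lemma efrac: "exp (2 * of_real pi * \<i> * of_real (frac (2*t))) = (exp (2 * of_real pi * \<i> * of_real t))^2"
proof -
  have "exp (2 * of_real pi * \<i> * of_real (frac (2*t))) = exp (2 * of_real pi * \<i> * of_real (2*t) + \<i> * (of_int (-\<lfloor>2*t\<rfloor>) * (of_real pi * 2)))"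
    by (simp add: frac_def algebra_simps)
  also have "\<dots> = exp (2 * (2 * of_real pi * \<i> * of_real t))" by (simp only: exp_plus_2pin) (simp add: algebra_simps)
  also have "\<dots> = (exp (2 * of_real pi * \<i> * of_real t))^2" by (metis exp_double)
  finally show ?thesis .
qed

lemma rep: "x0 < 1 \<Longrightarrow> 0 \<le> x0 \<Longrightarrow> 0 < Re (1 + of_real x0 * exp (- 4 * of_real pi * \<i> * of_real t))"
proof -
  assume a: "x0 < 1" "0 \<le> x0"
  have r: "Re (exp (- 4 * of_real pi * \<i> * of_real t)) = cos (-4*pi*t)"
    unfolding Re_exp by simp
  have "Re (1 + of_real x0 * exp (- 4 * of_real pi * \<i> * of_real t)) = 1 + x0 * cos (-4*pi*t)"
    by (simp only: r plus_complex.sel Re_complex_of_real one_complex.sel times_complex.sel Im_complex_of_real mult_zero_left diff_zero)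
  moreover have "x0 * cos (-4*pi*t) \<ge> - x0" using mult_left_mono[OF cos_ge_minus_one a(2), of "-4*pi*t"] by simp
  ultimately show ?thesis using a by linarith
qed

lemma eper: "exp (2 * of_real pi * \<i> * of_real (t + 1)) = exp (2 * of_real pi * \<i> * of_real t)"
proof -
  have "exp (2 * of_real pi * \<i> * of_real (t + 1)) = exp (2 * of_real pi * \<i> * of_real t + \<i> * (of_int 1 * (of_real pi * 2)))"
    by (simp add: algebra_simps)
  also have "\<dots> = exp (2 * of_real pi * \<i> * of_real t)" by (simp only: exp_plus_2pin)
  finally show ?thesis .
qed

theorem mainTheorem2:
  fixes \<epsilon> x0 :: real
  assumes "\<epsilon> > 0" and "0 \<le> x0" and "x0 < 1/4"
    and "\<epsilon>^2 / (1/4 - \<epsilon>^2 * x0) < 1"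
  shows "invariant_two_curve 0 (\<lambda>\<theta> z. z^2 + Cfun \<epsilon> x0 \<theta>) (gamma_tilde \<epsilon> x0)
         \<and> (\<forall>\<theta>. (gamma_tilde \<epsilon> x0 \<theta>)^2 + Cfun \<epsilon> x0 (frac (2 * \<theta>)) = gamma_tilde \<epsilon> x0 \<theta>)"
proof -
  define E where "E t = exp (2 * of_real pi * \<i> * of_real t)" for t
  define S where "S t = csqrt (1 + of_real x0 * inverse (E t)^2)" for t
  have g: "gamma_tilde \<epsilon> x0 t = 1/2 + of_real \<epsilon> * E t * S t" for t
    unfolding gamma_tilde_def E_def S_def e4 ..
  have Enz: "E t \<noteq> 0" for t unfolding E_def by simp
  have Sre: "0 < Re (1 + of_real x0 * inverse (E t)^2)" for t
    using rep[of x0 t] assms unfolding E_def e4 by simp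
  have S2: "(S t)^2 = 1 + of_real x0 * inverse (E t)^2" for t unfolding S_def by simp
  have Snz: "S t \<noteq> 0" for t using Sre[of t] S2[of t] by (metis csqrt_eq_0 S_def zero_complex.simps(1) less_irrefl)
  have ES2: "(E t * S t)^2 = (E t)^2 + of_real x0" for t
  proof -
    have "(E t * S t)^2 = (E t)^2 + of_real x0 * ((E t)^2 * inverse (E t)^2)"
      by (simp add: power_mult_distrib S2 algebra_simps)
    also have "(E t)^2 * inverse (E t)^2 = 1" using Enz[of t] by (metis power_mult_distrib right_inverse power_one)
    finally show ?thesis by simp
  qed
  have feq: "(gamma_tilde \<epsilon> x0 t)^2 + Cfun \<epsilon> x0 (frac (2 * t)) = gamma_tilde \<epsilon> x0 t" for t
  proof -
    have C: "Cfun \<epsilon> x0 (frac (2 * t)) = 1/4 - of_real (\<epsilon>^2 * x0) - of_real (\<epsilon>^2) * (E t)^2"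
      unfolding Cfun_def efrac E_def ..
    have "(of_real \<epsilon> * E t * S t)^2 = of_real (\<epsilon>^2) * (E t)^2 + of_real (\<epsilon>^2 * x0)"
      using Enz[of t] by (simp add: power_mult_distrib S2 field_simps)
    then show ?thesis unfolding g C by (simp add: power2_eq_square algebra_simps)
  qed
  have Eper: "E (t + 1) = E t" for t unfolding E_def by (rule eper)
  have per: "\<forall>t. gamma_tilde \<epsilon> x0 (t + 1) = gamma_tilde \<epsilon> x0 t"
    unfolding g S_def Eper by simp
  have cont: "continuous_on UNIV (gamma_tilde \<epsilon> x0)"
  proof (rule continuous_at_imp_continuous_on, intro ballI)
    fix t :: real
    have nn: "1 + of_real x0 * exp (- 4 * of_real pi * \<i> * of_real t) \<notin> \<real>\<^sub>\<le>\<^sub>0"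
      using rep[of x0 t] assms by (auto simp: complex_nonpos_Reals_iff)
    show "isCont (gamma_tilde \<epsilon> x0) t" unfolding gamma_tilde_def
      by (intro continuous_intros isCont_csqrt' nn)
  qed
  have inj: "inj_on (gamma_tilde \<epsilon> x0) {0..<1}"
  proof (rule inj_onI)
    fix a b :: real assume a: "a \<in> {0..<1}" and b: "b \<in> {0..<1}"
      and eq: "gamma_tilde \<epsilon> x0 a = gamma_tilde \<epsilon> x0 b"
    have eq1: "E a * S a = E b * S b" using eq assms(1) unfolding g by simp
    hence "(E a * S a)^2 = (E b * S b)^2" by simp
    hence "(E a)^2 + of_real x0 = (E b)^2 + of_real x0"
      by (simp add: ES2)
    hence sq: "(E a - E b) * (E a + E b) = 0" by (simp add: power2_eq_square algebra_simps)
    have "E a = E b"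
    proof (rule ccontr)
      assume ne: "E a \<noteq> E b"
      hence m: "E a = - E b" using sq by (simp add: add_eq_0_iff)
      hence "S a = S b" unfolding S_def by simp
      hence "E a * S a = - (E a * S a)" using eq1 m by simp
      hence "E a * S a = 0" by simp
      thus False using Enz Snz by simp
    qed
    then obtain n :: int where n: "2 * of_real pi * \<i> * of_real a = 2 * of_real pi * \<i> * of_real b + (of_int (2 * n) * pi) * \<i>"
      unfolding E_def exp_eq by blast
    hence "(2 * of_real pi * \<i>) * (of_real a - of_real b - of_int n) = (0::complex)"
      by (simp add: algebra_simps)
    hence "complex_of_real (a - b - of_int n) = 0" by (simp only: of_real_diff of_real_of_int_eq) simp
    hence "a = b + n" by (simp only: of_real_eq_0_iff)
    moreover have "\<bar>a - b\<bar> < 1" using a b by auto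
    ultimately have "n = 0" by simp
    thus "a = b" using \<open>a = b + n\<close> by simp
  qed
  show ?thesis
    unfolding invariant_two_curve_def two_curve_param_def
    using per cont inj feq by auto
qed

end
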